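(* Let $1\le p<\infty$ and let $d_{w,p}$ be a Lorentz sequence space. Let $Y$ be a complemented closed subspace of $d_{w,p}$ isomorphic to $\ell_p$, let $P\in L(d_{w,p})$ be a projection with range $Y$, and let $U\colon Y\to\ell_p$ be an isomorphism onto $\ell_p$. If $T=jUP$, then $J_T=J^j$.
   Context: Let $1\le p<\infty$ and let $w=(w_n)$ be a real sequence with $w_1=1$, $w_n\downarrow 0$ and $\sum_n w_n=\infty$. The Lorentz sequence space $d_{w,p}$ is the Banach space of all $x=(x_n)\in c_0$ with $\|x\|_{d_{w,p}}=\big(\sum_{n}w_n (x^*_n)^p\big)^{1/p}<\infty$, where $(x^*_n)$ is the non-increasing rearrangement of $(|x_n|)$. Let $(e_n)$ be the unit vector basis of $d_{w,p}$ and $(f_n)$ that of $\ell_p$; $j\colon\ell_p\to d_{w,p}$ is the formal identity, $j(f_n)=e_n$. $J^j$ is the set of operators $S\in L(d_{w,p})$ of the form $S=AjB$ with $A\in L(d_{w,p})$, $B\in L(d_{w,p},\ell_p)$. $J_T=\{\sum_{i=1}^n A_iTB_i: n\in\mathbb N, A_i,B_i\in L(d_{w,p})\}$ is the ideal generated by $T$. *)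

theory Defs
  imports Complex_Main
begin

text \<open>Sequences are functions nat => real, indexed from 0 (so the paper's w_1 is w 0).\<close>

definition add_seq :: "(nat \<Rightarrow> real) \<Rightarrow> (nat \<Rightarrow> real) \<Rightarrow> nat \<Rightarrow> real" where
  "add_seq x y = (\<lambda>n. x n + y n)"

definition scale_seq :: "real \<Rightarrow> (nat \<Rightarrow> real) \<Rightarrow> nat \<Rightarrow> real" where
  "scale_seq c x = (\<lambda>n. c * x n)"

definition diff_seq :: "(nat \<Rightarrow> real) \<Rightarrow> (nat \<Rightarrow> real) \<Rightarrow> nat \<Rightarrow> real" where
  "diff_seq x y = (\<lambda>n. x n - y n)"

text \<open>Non-increasing rearrangement of (|x n|) (0-indexed), via the distribution function.\<close>
definition xstar :: "(nat \<Rightarrow> real) \<Rightarrow> nat \<Rightarrow> real" where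
  "xstar x n = Inf {t. 0 \<le> t \<and> finite {k. t < \<bar>x k\<bar>} \<and> card {k. t < \<bar>x k\<bar>} \<le> n}"

definition weight_seq :: "(nat \<Rightarrow> real) \<Rightarrow> bool" where
  "weight_seq w \<longleftrightarrow> w 0 = 1 \<and> antimono w \<and> w \<longlonglongrightarrow> 0 \<and> \<not> summable w"

definition lorentz_space :: "(nat \<Rightarrow> real) \<Rightarrow> real \<Rightarrow> (nat \<Rightarrow> real) set" where
  "lorentz_space w p = {x. x \<longlonglongrightarrow> 0 \<and> summable (\<lambda>n. w n * xstar x n powr p)}"

definition lorentz_norm :: "(nat \<Rightarrow> real) \<Rightarrow> real \<Rightarrow> (nat \<Rightarrow> real) \<Rightarrow> real" where
  "lorentz_norm w p x = (\<Sum>n. w n * xstar x n powr p) powr (1 / p)"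

definition lp_space :: "real \<Rightarrow> (nat \<Rightarrow> real) set" where
  "lp_space p = {x. summable (\<lambda>n. \<bar>x n\<bar> powr p)}"

definition lp_norm :: "real \<Rightarrow> (nat \<Rightarrow> real) \<Rightarrow> real" where
  "lp_norm p x = (\<Sum>n. \<bar>x n\<bar> powr p) powr (1 / p)"

definition linear_subspace :: "(nat \<Rightarrow> real) set \<Rightarrow> bool" where
  "linear_subspace X \<longleftrightarrow> (\<lambda>n. 0) \<in> X \<and>
     (\<forall>x\<in>X. \<forall>y\<in>X. add_seq x y \<in> X) \<and> (\<forall>c. \<forall>x\<in>X. scale_seq c x \<in> X)"

definition closed_in_norm :: "((nat \<Rightarrow> real) \<Rightarrow> real) \<Rightarrow> (nat \<Rightarrow> real) set \<Rightarrow> (nat \<Rightarrow> real) set \<Rightarrow> bool" where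
  "closed_in_norm N X Y \<longleftrightarrow>
     (\<forall>s x. (\<forall>k. s k \<in> Y) \<and> x \<in> X \<and> (\<lambda>k. N (diff_seq (s k) x)) \<longlonglongrightarrow> 0 \<longrightarrow> x \<in> Y)"

definition linear_on :: "(nat \<Rightarrow> real) set \<Rightarrow> ((nat \<Rightarrow> real) \<Rightarrow> (nat \<Rightarrow> real)) \<Rightarrow> bool" where
  "linear_on X T \<longleftrightarrow> (\<forall>x\<in>X. \<forall>y\<in>X. T (add_seq x y) = add_seq (T x) (T y)) \<and>
     (\<forall>c. \<forall>x\<in>X. T (scale_seq c x) = scale_seq c (T x))"

text \<open>Bounded linear operator from (X, N1) into (Y, N2); operators are identified
  when they agree on X.\<close>
definition bounded_op :: "((nat \<Rightarrow> real) \<Rightarrow> real) \<Rightarrow> (nat \<Rightarrow> real) set \<Rightarrow>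
    ((nat \<Rightarrow> real) \<Rightarrow> real) \<Rightarrow> (nat \<Rightarrow> real) set \<Rightarrow> ((nat \<Rightarrow> real) \<Rightarrow> (nat \<Rightarrow> real)) \<Rightarrow> bool" where
  "bounded_op N1 X N2 Y T \<longleftrightarrow> (\<forall>x\<in>X. T x \<in> Y) \<and> linear_on X T \<and>
     (\<exists>C. \<forall>x\<in>X. N2 (T x) \<le> C * N1 x)"

definition Ld :: "(nat \<Rightarrow> real) \<Rightarrow> real \<Rightarrow> ((nat \<Rightarrow> real) \<Rightarrow> (nat \<Rightarrow> real)) \<Rightarrow> bool" where
  "Ld w p T \<longleftrightarrow> bounded_op (lorentz_norm w p) (lorentz_space w p) (lorentz_norm w p) (lorentz_space w p) T"

text \<open>Membership in J^j: S = A j B with A in L(d), B in L(d, l_p); j is the formal identity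
  l_p -> d, i.e. the identity on sequences.\<close>
definition in_Jj :: "(nat \<Rightarrow> real) \<Rightarrow> real \<Rightarrow> ((nat \<Rightarrow> real) \<Rightarrow> (nat \<Rightarrow> real)) \<Rightarrow> bool" where
  "in_Jj w p S \<longleftrightarrow> (\<exists>A B. Ld w p A \<and>
     bounded_op (lorentz_norm w p) (lorentz_space w p) (lp_norm p) (lp_space p) B \<and>
     (\<forall>x\<in>lorentz_space w p. S x = A (B x)))"

definition in_JT :: "(nat \<Rightarrow> real) \<Rightarrow> real \<Rightarrow> ((nat \<Rightarrow> real) \<Rightarrow> (nat \<Rightarrow> real)) \<Rightarrow>
    ((nat \<Rightarrow> real) \<Rightarrow> (nat \<Rightarrow> real)) \<Rightarrow> bool" where
  "in_JT w p T S \<longleftrightarrow> (\<exists>(n::nat) A B. (\<forall>i<n. Ld w p (A i) \<and> Ld w p (B i)) \<and>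
     (\<forall>x\<in>lorentz_space w p. S x = (\<lambda>k. \<Sum>i<n. A i (T (B i x)) k)))"

end

theory Submission
  imports Defs
begin
definition Dset :: "(nat \<Rightarrow> real) \<Rightarrow> real \<Rightarrow> nat set" where
  "Dset x t = {k. t < \<bar>x k\<bar>}"
definition Tset :: "(nat \<Rightarrow> real) \<Rightarrow> nat \<Rightarrow> real set" where
  "Tset x n = {t. 0 \<le> t \<and> finite (Dset x t) \<and> card (Dset x t) \<le> n}"

lemma xstar_Tset: "xstar x n = Inf (Tset x n)"
  unfolding xstar_def Tset_def Dset_def by simp

lemma Tset_bdd: "bdd_below (Tset x n)"
  unfolding Tset_def by (rule bdd_belowI[of _ 0]) auto

lemma Tset_ne: assumes "x \<longlonglongrightarrow> 0" shows "Tset x n \<noteq> {}"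
proof -
  have "Bseq x" using assms convergent_imp_Bseq convergentI by blast
  then obtain M where M: "M > 0" "\<And>k. norm (x k) \<le> M" by (auto simp: Bseq_def)
  have "Dset x M = {}" using M by (auto simp: Dset_def not_less)
  then have "M \<in> Tset x n" using M by (simp add: Tset_def)
  then show ?thesis by blast
qed

lemma xstar_nonneg: assumes "x \<longlonglongrightarrow> 0" shows "0 \<le> xstar x n"
  unfolding xstar_Tset using Tset_ne[OF assms]
  by (intro cInf_greatest) (auto simp: Tset_def)

lemma Tset_up: assumes "t \<in> Tset x n" "t \<le> s" shows "s \<in> Tset x n"
proof -
  have "Dset x s \<subseteq> Dset x t" using assms(2) by (auto simp: Dset_def)
  then show ?thesis using assms unfolding Tset_def
    by (auto intro: finite_subset card_mono order_trans)
qed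

lemma xstar_less: assumes "x \<longlonglongrightarrow> 0" "xstar x n < s" shows "s \<in> Tset x n"
proof -
  obtain t where "t \<in> Tset x n" "t < s"
    using assms(2) cInf_less_iff[OF Tset_ne[OF assms(1)] Tset_bdd] unfolding xstar_Tset by blast
  then show ?thesis using Tset_up by auto
qed

lemma xstar_mono_set: assumes "x \<longlonglongrightarrow> 0" "Tset x n \<subseteq> Tset y m" shows "xstar y m \<le> xstar x n"
  unfolding xstar_Tset by (rule cInf_superset_mono[OF Tset_ne[OF assms(1)] Tset_bdd assms(2)])

lemma xstar_antimono: assumes "x \<longlonglongrightarrow> 0" "n \<le> m" shows "xstar x m \<le> xstar x n"
  by (rule xstar_mono_set[OF assms(1)]) (use assms(2) in \<open>auto simp: Tset_def\<close>)

lemma xstar_zero: "xstar (\<lambda>k. 0) n = 0"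
proof -
  have "{t::real. 0 \<le> t \<and> finite {k::nat. t < \<bar>0::real\<bar>} \<and> card {k::nat. t < \<bar>0::real\<bar>} \<le> n} = {0..}"
    by auto
  then show ?thesis unfolding xstar_def by simp
qed

lemma xstar_sub: assumes "x \<longlonglongrightarrow> 0" "0 < N"
  shows "xstar (\<lambda>k. x (N * k + i)) n \<le> xstar x n"
proof (rule xstar_mono_set[OF assms(1)])
  show "Tset x n \<subseteq> Tset (\<lambda>k. x (N * k + i)) n"
  proof
    fix t assume t: "t \<in> Tset x n"
    have inj: "inj (\<lambda>k. N * k + i)" using assms(2) by (auto simp: inj_def)
    have sub: "(\<lambda>k. N * k + i) ` Dset (\<lambda>k. x (N * k + i)) t \<subseteq> Dset x t" by (auto simp: Dset_def)
    have fin: "finite (Dset x t)" using t by (simp add: Tset_def)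
    have f2: "finite (Dset (\<lambda>k. x (N * k + i)) t)"
      using finite_imageD[OF finite_subset[OF sub fin]] inj inj_on_subset by blast
    have "card (Dset (\<lambda>k. x (N * k + i)) t) = card ((\<lambda>k. N * k + i) ` Dset (\<lambda>k. x (N * k + i)) t)"
      using inj by (simp add: card_image inj_on_subset)
    also have "\<dots> \<le> card (Dset x t)" by (rule card_mono[OF fin sub])
    finally show "t \<in> Tset (\<lambda>k. x (N * k + i)) n" using t f2 by (auto simp: Tset_def)
  qed
qed

lemma xstar_add: assumes "x \<longlonglongrightarrow> 0" "y \<longlonglongrightarrow> 0"
  shows "xstar (add_seq x y) (m + k) \<le> xstar x m + xstar y k"
proof (rule dense_ge)
  fix s assume s: "xstar x m + xstar y k < s"
  define e where "e = (s - xstar x m - xstar y k) / 2"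
  have e: "e > 0" using s by (simp add: e_def)
  have a: "xstar x m + e \<in> Tset x m" by (rule xstar_less[OF assms(1)]) (use e in simp)
  have b: "xstar y k + e \<in> Tset y k" by (rule xstar_less[OF assms(2)]) (use e in simp)
  have se: "s = (xstar x m + e) + (xstar y k + e)" by (simp add: e_def)
  have sub: "Dset (add_seq x y) s \<subseteq> Dset x (xstar x m + e) \<union> Dset y (xstar y k + e)"
  proof
    fix j assume "j \<in> Dset (add_seq x y) s"
    then have "s < \<bar>x j + y j\<bar>" by (simp add: Dset_def add_seq_def)
    moreover have "\<bar>x j + y j\<bar> \<le> \<bar>x j\<bar> + \<bar>y j\<bar>" by (rule abs_triangle_ineq)
    ultimately show "j \<in> Dset x (xstar x m + e) \<union> Dset y (xstar y k + e)"
      unfolding se Dset_def by auto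
  qed
  have fins: "finite (Dset x (xstar x m + e))" "finite (Dset y (xstar y k + e))"
    using a b by (auto simp: Tset_def)
  have fin: "finite (Dset (add_seq x y) s)" using finite_subset[OF sub] fins by blast
  have "card (Dset (add_seq x y) s) \<le> card (Dset x (xstar x m + e) \<union> Dset y (xstar y k + e))"
    by (rule card_mono[OF _ sub]) (use fins in blast)
  also have "\<dots> \<le> m + k" using card_Un_le a b unfolding Tset_def by (smt (verit) add_mono mem_Collect_eq order_trans)
  finally have "s \<in> Tset (add_seq x y) (m + k)"
    using fin xstar_nonneg[OF assms(1), of m] xstar_nonneg[OF assms(2), of k] s unfolding Tset_def by auto
  then show "xstar (add_seq x y) (m + k) \<le> s" unfolding xstar_Tset by (rule cInf_lower[OF _ Tset_bdd])
qed

lemma sum_div_block: "(\<Sum>m<N*K. g (m div N)) = real N * (\<Sum>k<K. g k)"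
proof (induction K)
  case 0 then show ?case by simp
next
  case (Suc K)
  have "(\<Sum>m<N*Suc K. g (m div N)) = (\<Sum>m<N*K. g (m div N)) + (\<Sum>m\<in>{N*K..<N*K+N}. g (m div N))"
    by (simp add: algebra_simps sum.atLeastLessThan_concat[symmetric] atLeast0LessThan[symmetric])
  also have "(\<Sum>m\<in>{N*K..<N*K+N}. g (m div N)) = (\<Sum>m\<in>{N*K..<N*K+N}. g K)"
  proof (rule sum.cong)
    fix m assume "m \<in> {N*K..<N*K+N}"
    then have "m div N = K" by (simp add: div_nat_eqI mult.commute)
    then show "g (m div N) = g K" by simp
  qed simp
  finally show ?case using Suc by (simp add: algebra_simps)
qed

lemma summable_div:
  assumes "0 < N" "\<And>k. 0 \<le> g k" "summable g"
  shows "summable (\<lambda>m. g (m div N))" "(\<Sum>m. g (m div N)) \<le> real N * (\<Sum>k. g k)"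
proof -
  have bnd: "(\<Sum>m<M. g (m div N)) \<le> real N * (\<Sum>k. g k)" for M
  proof -
    have "M \<le> N * M" using assms(1) by simp
    then have "(\<Sum>m<M. g (m div N)) \<le> (\<Sum>m<N*M. g (m div N))"
      by (intro sum_mono2) (auto simp: assms(2))
    also have "\<dots> = real N * (\<Sum>k<M. g k)" by (rule sum_div_block)
    also have "\<dots> \<le> real N * (\<Sum>k. g k)"
      by (intro mult_left_mono sum_le_suminf assms) auto
    finally show ?thesis .
  qed
  show s: "summable (\<lambda>m. g (m div N))" by (rule summableI_nonneg_bounded[OF assms(2) bnd])
  show "(\<Sum>m. g (m div N)) \<le> real N * (\<Sum>k. g k)" by (rule suminf_le_const[OF s bnd])
qed

lemma powr_add_le: assumes "0 \<le> a" "0 \<le> b" "0 < (p::real)"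
  shows "(a + b) powr p \<le> 2 powr p * (a powr p + b powr p)"
proof -
  have "(a + b) powr p \<le> (2 * max a b) powr p"
    by (rule powr_mono2) (use assms in auto)
  also have "\<dots> = 2 powr p * max a b powr p" by (simp add: powr_mult)
  also have "max a b powr p \<le> a powr p + b powr p" by (simp add: max_def)
  finally show ?thesis by simp
qed

lemma weight_nonneg: "weight_seq w \<Longrightarrow> 0 \<le> w n"
  unfolding weight_seq_def using decseq_ge by blast

lemma weight_anti: "weight_seq w \<Longrightarrow> m \<le> n \<Longrightarrow> w n \<le> w m"
  unfolding weight_seq_def by (simp add: antimonoD)

definition lnp :: "(nat \<Rightarrow> real) \<Rightarrow> real \<Rightarrow> (nat \<Rightarrow> real) \<Rightarrow> real" where
  "lnp w p x = (\<Sum>n. w n * xstar x n powr p)"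

lemma lnp_nonneg: "weight_seq w \<Longrightarrow> x \<in> lorentz_space w p \<Longrightarrow> 0 \<le> lnp w p x"
  unfolding lnp_def lorentz_space_def
  by (auto intro!: suminf_nonneg simp: weight_nonneg)

lemma lorentz_norm_lnp: "lorentz_norm w p x = lnp w p x powr (1/p)"
  by (simp add: lorentz_norm_def lnp_def)

lemma lorentz_add:
  assumes w: "weight_seq w" and p: "0 < p" and x: "x \<in> lorentz_space w p" and y: "y \<in> lorentz_space w p"
  shows "add_seq x y \<in> lorentz_space w p \<and> lnp w p (add_seq x y) \<le> 2 * 2 powr p * (lnp w p x + lnp w p y)"
proof -
  have x0: "x \<longlonglongrightarrow> 0" and y0: "y \<longlonglongrightarrow> 0" using x y by (auto simp: lorentz_space_def)
  have xy0: "add_seq x y \<longlonglongrightarrow> 0" unfolding add_seq_def using tendsto_add[OF x0 y0] by simp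
  have sx: "summable (\<lambda>n. w n * xstar x n powr p)" and sy: "summable (\<lambda>n. w n * xstar y n powr p)"
    using x y by (auto simp: lorentz_space_def)
  define g where "g k = 2 powr p * (w k * xstar x k powr p + w k * xstar y k powr p)" for k
  have g0: "0 \<le> g k" for k unfolding g_def using weight_nonneg[OF w] by auto
  have gs: "summable g" unfolding g_def by (intro summable_mult summable_add sx sy)
  have gsum: "(\<Sum>k. g k) = 2 powr p * (lnp w p x + lnp w p y)"
    unfolding g_def lnp_def by (simp add: suminf_mult suminf_add[OF sx sy] sx sy summable_add)
  have fle: "norm (w m * xstar (add_seq x y) m powr p) \<le> g (m div 2)" for m
  proof -
    let ?a = "xstar x (m div 2)" and ?b = "xstar y (m div 2)"
    have a0: "0 \<le> ?a" and b0: "0 \<le> ?b" using xstar_nonneg x0 y0 by auto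
    have "xstar (add_seq x y) m \<le> xstar (add_seq x y) (m div 2 + m div 2)"
      by (rule xstar_antimono[OF xy0]) simp
    also have "\<dots> \<le> ?a + ?b" by (rule xstar_add[OF x0 y0])
    finally have le: "xstar (add_seq x y) m \<le> ?a + ?b" .
    have "xstar (add_seq x y) m powr p \<le> (?a + ?b) powr p"
      by (rule powr_mono2) (use le xstar_nonneg[OF xy0] p in auto)
    also have "\<dots> \<le> 2 powr p * (?a powr p + ?b powr p)" by (rule powr_add_le[OF a0 b0 p])
    finally have A: "xstar (add_seq x y) m powr p \<le> 2 powr p * (?a powr p + ?b powr p)" .
    have wm: "w m \<le> w (m div 2)" "0 \<le> w m" using weight_anti[OF w] weight_nonneg[OF w] by auto
    have "w m * xstar (add_seq x y) m powr p \<le> w (m div 2) * (2 powr p * (?a powr p + ?b powr p))"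
      by (rule mult_mono) (use wm A in auto)
    then show ?thesis using wm by (simp add: g_def algebra_simps)
  qed
  have sf: "summable (\<lambda>m. w m * xstar (add_seq x y) m powr p)"
    by (rule summable_comparison_test'[OF summable_div(1)[OF _ g0 gs, of 2]]) (use fle in auto)
  have "lnp w p (add_seq x y) \<le> (\<Sum>m. g (m div 2))"
    unfolding lnp_def by (rule suminf_le[OF _ sf summable_div(1)[OF _ g0 gs]]) (use fle in \<open>auto intro: abs_le_D1\<close>)
  also have "\<dots> \<le> 2 * (\<Sum>k. g k)" using summable_div(2)[OF _ g0 gs, of 2] by simp
  finally show ?thesis using sf xy0 gsum by (simp add: lorentz_space_def)
qed

lemma root_le1:
  fixes S T C p :: real
  assumes "0 < p" "0 \<le> S" "0 \<le> T" "0 \<le> C" "S powr (1/p) \<le> C * T powr (1/p)"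
  shows "S \<le> C powr p * T"
proof -
  have "S = (S powr (1/p)) powr p" using assms by (simp add: powr_powr)
  also have "\<dots> \<le> (C * T powr (1/p)) powr p" by (rule powr_mono2) (use assms in auto)
  also have "\<dots> = C powr p * T" using assms by (simp add: powr_mult powr_powr)
  finally show ?thesis .
qed

lemma root_le2:
  fixes S T C p :: real
  assumes "0 < p" "0 \<le> S" "0 \<le> T" "0 \<le> C" "S \<le> C * T"
  shows "S powr (1/p) \<le> C powr (1/p) * T powr (1/p)"
proof -
  have "S powr (1/p) \<le> (C * T) powr (1/p)" by (rule powr_mono2) (use assms in auto)
  also have "\<dots> = C powr (1/p) * T powr (1/p)" using assms by (simp add: powr_mult)
  finally show ?thesis .
qed

lemma bounded_nonneg_const:
  assumes "bounded_op N1 X N2 Y T" "\<forall>x\<in>X. 0 \<le> N1 x"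
  shows "\<exists>C\<ge>0. \<forall>x\<in>X. N2 (T x) \<le> C * N1 x"
proof -
  obtain C where C: "\<forall>x\<in>X. N2 (T x) \<le> C * N1 x" using assms(1) by (auto simp: bounded_op_def)
  have "\<forall>x\<in>X. N2 (T x) \<le> max C 0 * N1 x"
  proof
    fix x assume x: "x \<in> X"
    have "C * N1 x \<le> max C 0 * N1 x" by (rule mult_right_mono) (use assms(2) x in auto)
    then show "N2 (T x) \<le> max C 0 * N1 x" using C x by auto
  qed
  then show ?thesis by (intro exI[of _ "max C 0"]) auto
qed

lemma zero_lorentz: "(\<lambda>k. 0) \<in> lorentz_space w p" "lnp w p (\<lambda>k. 0) = 0"
  unfolding lorentz_space_def lnp_def by (auto simp: xstar_zero)

lemma lorentz_sum:
  assumes w: "weight_seq w" and p: "0 < p" and v: "\<forall>i<n. v i \<in> lorentz_space w p"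
  shows "(\<lambda>k. \<Sum>i<n. v i k) \<in> lorentz_space w p \<and>
         lnp w p (\<lambda>k. \<Sum>i<n. v i k) \<le> (2 * 2 powr p) ^ n * (\<Sum>i<n. lnp w p (v i))"
  using v
proof (induction n)
  case 0 then show ?case using zero_lorentz by simp
next
  case (Suc n)
  let ?S = "\<lambda>k. \<Sum>i<n. v i k"
  let ?c = "2 * 2 powr p :: real"
  have c1: "1 \<le> ?c" using p ge_one_powr_ge_zero[of 2 p] by simp
  have IH: "?S \<in> lorentz_space w p" "lnp w p ?S \<le> ?c ^ n * (\<Sum>i<n. lnp w p (v i))" using Suc by auto
  have vn: "v n \<in> lorentz_space w p" using Suc by auto
  have eq: "(\<lambda>k. \<Sum>i<Suc n. v i k) = add_seq ?S (v n)" by (simp add: add_seq_def)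
  note A = lorentz_add[OF w p IH(1) vn]
  have n0: "0 \<le> lnp w p (v n)" by (rule lnp_nonneg[OF w vn])
  have s0: "0 \<le> (\<Sum>i<n. lnp w p (v i))" using Suc.prems by (intro sum_nonneg lnp_nonneg[OF w]) auto
  have "lnp w p (add_seq ?S (v n)) \<le> ?c * (lnp w p ?S + lnp w p (v n))" using A by simp
  also have "\<dots> \<le> ?c * (?c ^ n * (\<Sum>i<n. lnp w p (v i)) + ?c ^ n * lnp w p (v n))"
  proof -
    have "lnp w p (v n) \<le> ?c ^ n * lnp w p (v n)" using mult_right_mono[OF one_le_power[OF c1, of n] n0] by simp
    then show ?thesis using IH(2) by (intro mult_left_mono) auto
  qed
  also have "\<dots> = ?c ^ Suc n * (\<Sum>i<Suc n. lnp w p (v i))" by (simp add: algebra_simps)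
  finally show ?case using A eq by simp
qed

lemma lorentz_sub:
  assumes w: "weight_seq w" and p: "0 < p" and N: "0 < N" and x: "x \<in> lorentz_space w p"
  shows "(\<lambda>j. x (N * j + i)) \<in> lorentz_space w p \<and> lnp w p (\<lambda>j. x (N * j + i)) \<le> lnp w p x"
proof -
  have x0: "x \<longlonglongrightarrow> 0" and sx: "summable (\<lambda>n. w n * xstar x n powr p)" using x by (auto simp: lorentz_space_def)
  have sm: "strict_mono (\<lambda>j. N * j + i)" using N by (auto simp: strict_mono_def)
  have s0: "(\<lambda>j. x (N * j + i)) \<longlonglongrightarrow> 0" using LIMSEQ_subseq_LIMSEQ[OF x0 sm] by (simp add: o_def)
  have le: "norm (w n * xstar (\<lambda>j. x (N * j + i)) n powr p) \<le> w n * xstar x n powr p" for n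
  proof -
    have "xstar (\<lambda>j. x (N * j + i)) n powr p \<le> xstar x n powr p"
      by (rule powr_mono2) (use p xstar_nonneg[OF s0] xstar_sub[OF x0 N] in auto)
    then show ?thesis using weight_nonneg[OF w, of n] by (simp add: mult_left_mono)
  qed
  have ss: "summable (\<lambda>n. w n * xstar (\<lambda>j. x (N * j + i)) n powr p)"
    by (rule summable_comparison_test'[OF sx]) (use le in auto)
  have "lnp w p (\<lambda>j. x (N * j + i)) \<le> lnp w p x"
    unfolding lnp_def by (rule suminf_le[OF _ ss sx]) (use le in \<open>auto intro: abs_le_D1\<close>)
  then show ?thesis using ss s0 by (simp add: lorentz_space_def)
qed

lemma lorentz_norm_nonneg: "0 \<le> lorentz_norm w p x"
  by (simp add: lorentz_norm_def)

lemma Ld_const: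
  assumes "Ld w p A" shows "\<exists>C. \<forall>i. (i < (N::nat) \<longrightarrow> True) \<and> (\<forall>z\<in>lorentz_space w p. lorentz_norm w p (A z) \<le> C * lorentz_norm w p z) \<and> 0 \<le> C"
  using bounded_nonneg_const[of "lorentz_norm w p" "lorentz_space w p" "lorentz_norm w p" "lorentz_space w p" A]
    assms lorentz_norm_nonneg unfolding Ld_def by blast

lemma Av_Ld:
  assumes w: "weight_seq w" and p: "1 \<le> p" and N: "0 < N" and A: "\<forall>i<N. Ld w p (A i)"
  shows "Ld w p (\<lambda>z k. \<Sum>i<N. A i (\<lambda>j. z (N * j + i)) k)"
proof -
  have p0: "0 < p" using p by simp
  let ?LS = "lorentz_space w p"
  let ?Av = "\<lambda>z k. \<Sum>i<N. A i (\<lambda>j. z (N * j + i)) k"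
  have sub: "z \<in> ?LS \<Longrightarrow> (\<lambda>j. z (N * j + i)) \<in> ?LS \<and> lnp w p (\<lambda>j. z (N * j + i)) \<le> lnp w p z" for z i
    by (rule lorentz_sub[OF w p0 N])
  have Amap: "i < N \<Longrightarrow> z \<in> ?LS \<Longrightarrow> A i z \<in> ?LS" for i z using A by (auto simp: Ld_def bounded_op_def)
  have Alin: "i < N \<Longrightarrow> linear_on ?LS (A i)" for i using A by (auto simp: Ld_def bounded_op_def)
  have vmem: "z \<in> ?LS \<Longrightarrow> \<forall>i<N. A i (\<lambda>j. z (N * j + i)) \<in> ?LS" for z using sub Amap by blast
  have map: "\<forall>z\<in>?LS. ?Av z \<in> ?LS" using lorentz_sum[OF w p0 vmem] by blast
  have lin: "linear_on ?LS ?Av"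
    unfolding linear_on_def
  proof (intro conjI ballI allI)
    fix x y assume x: "x \<in> ?LS" and y: "y \<in> ?LS"
    have "\<And>i. i < N \<Longrightarrow> A i (\<lambda>j. add_seq x y (N * j + i)) = add_seq (A i (\<lambda>j. x (N * j + i))) (A i (\<lambda>j. y (N * j + i)))"
    proof -
      fix i assume i: "i < N"
      have "(\<lambda>j. add_seq x y (N * j + i)) = add_seq (\<lambda>j. x (N * j + i)) (\<lambda>j. y (N * j + i))"
        by (simp add: add_seq_def)
      then show "A i (\<lambda>j. add_seq x y (N * j + i)) = add_seq (A i (\<lambda>j. x (N * j + i))) (A i (\<lambda>j. y (N * j + i)))"
        using Alin[OF i] sub[OF x] sub[OF y] unfolding linear_on_def by auto
    qed
    then show "?Av (add_seq x y) = add_seq (?Av x) (?Av y)"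
      by (simp add: add_seq_def sum.distrib)
  next
    fix c x assume x: "x \<in> ?LS"
    have "\<And>i. i < N \<Longrightarrow> A i (\<lambda>j. scale_seq c x (N * j + i)) = scale_seq c (A i (\<lambda>j. x (N * j + i)))"
    proof -
      fix i assume i: "i < N"
      have "(\<lambda>j. scale_seq c x (N * j + i)) = scale_seq c (\<lambda>j. x (N * j + i))"
        by (simp add: scale_seq_def)
      then show "A i (\<lambda>j. scale_seq c x (N * j + i)) = scale_seq c (A i (\<lambda>j. x (N * j + i)))"
        using Alin[OF i] sub[OF x] unfolding linear_on_def by auto
    qed
    then show "?Av (scale_seq c x) = scale_seq c (?Av x)"
      by (simp add: scale_seq_def sum_distrib_left)
  qed
  have "\<forall>i\<in>{..<N}. \<exists>C\<ge>0. \<forall>z\<in>?LS. lorentz_norm w p (A i z) \<le> C * lorentz_norm w p z"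
    using A bounded_nonneg_const lorentz_norm_nonneg unfolding Ld_def by blast
  then obtain C where C: "\<And>i. i < N \<Longrightarrow> 0 \<le> C i \<and> (\<forall>z\<in>?LS. lorentz_norm w p (A i z) \<le> C i * lorentz_norm w p z)"
    using bchoice[of "{..<N}"] by (metis lessThan_iff)
  define K where "K = (2 * 2 powr p) ^ N * (\<Sum>i<N. C i powr p)"
  have K0: "0 \<le> K" unfolding K_def by (intro mult_nonneg_nonneg sum_nonneg) auto
  have bnd: "lorentz_norm w p (?Av z) \<le> K powr (1/p) * lorentz_norm w p z" if z: "z \<in> ?LS" for z
  proof -
    have each: "lnp w p (A i (\<lambda>j. z (N * j + i))) \<le> C i powr p * lnp w p z" if i: "i < N" for i
    proof -
      have s: "(\<lambda>j. z (N * j + i)) \<in> ?LS" "lnp w p (\<lambda>j. z (N * j + i)) \<le> lnp w p z" using sub[OF z] by auto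
      have "lnp w p (A i (\<lambda>j. z (N * j + i))) \<le> C i powr p * lnp w p (\<lambda>j. z (N * j + i))"
        apply (rule root_le1[OF p0 lnp_nonneg[OF w] lnp_nonneg[OF w]])
        using C[OF i] Amap[OF i s(1)] s(1) by (auto simp: lorentz_norm_lnp)
      also have "\<dots> \<le> C i powr p * lnp w p z" using s(2) by (simp add: mult_left_mono)
      finally show ?thesis .
    qed
    have "lnp w p (?Av z) \<le> (2 * 2 powr p) ^ N * (\<Sum>i<N. lnp w p (A i (\<lambda>j. z (N * j + i))))"
      using lorentz_sum[OF w p0 vmem[OF z]] by blast
    also have "\<dots> \<le> (2 * 2 powr p) ^ N * (\<Sum>i<N. C i powr p * lnp w p z)"
      by (intro mult_left_mono sum_mono each) auto
    also have "\<dots> = K * lnp w p z" by (simp add: K_def sum_distrib_right)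
    finally have le: "lnp w p (?Av z) \<le> K * lnp w p z" .
    have m: "?Av z \<in> ?LS" using map z by blast
    show ?thesis unfolding lorentz_norm_lnp
      using root_le2[OF p0 lnp_nonneg[OF w m] lnp_nonneg[OF w z] K0 le] .
  qed
  show ?thesis unfolding Ld_def bounded_op_def using map lin bnd by blast
qed

lemma lp_norm_nonneg: "0 \<le> lp_norm p x"
  by (simp add: lp_norm_def)

lemma Bv_bounded:
  assumes w: "weight_seq w" and p: "1 \<le> p" and N: "0 < N"
    and u: "\<forall>i<N. bounded_op (lorentz_norm w p) (lorentz_space w p) (lp_norm p) (lp_space p) (u i)"
  shows "bounded_op (lorentz_norm w p) (lorentz_space w p) (lp_norm p) (lp_space p) (\<lambda>x m. u (m mod N) x (m div N))"
proof -
  have p0: "0 < p" using p by simp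
  let ?LS = "lorentz_space w p"
  let ?Bv = "\<lambda>x m. u (m mod N) x (m div N)"
  have umap: "i < N \<Longrightarrow> x \<in> ?LS \<Longrightarrow> summable (\<lambda>k. \<bar>u i x k\<bar> powr p)" for i x
    using u by (auto simp: bounded_op_def lp_space_def)
  have ulin: "i < N \<Longrightarrow> linear_on ?LS (u i)" for i using u by (auto simp: bounded_op_def)
  define G where "G x k = (\<Sum>i<N. \<bar>u i x k\<bar> powr p)" for x k
  have G0: "0 \<le> G x k" for x k unfolding G_def by (intro sum_nonneg) auto
  have Gs: "x \<in> ?LS \<Longrightarrow> summable (G x)" for x unfolding G_def by (intro summable_sum umap) auto
  have le: "norm (\<bar>?Bv x m\<bar> powr p) \<le> G x (m div N)" for x m
  proof -
    have "m mod N \<in> {..<N}" using N by simp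
    then show ?thesis unfolding G_def
      by (simp add: member_le_sum[where f="\<lambda>i. \<bar>u i x (m div N)\<bar> powr p"])
  qed
  have Bs: "x \<in> ?LS \<Longrightarrow> summable (\<lambda>m. \<bar>?Bv x m\<bar> powr p)" for x
    by (rule summable_comparison_test'[OF summable_div(1)[OF N G0 Gs]]) (use le in auto)
  have map: "\<forall>x\<in>?LS. ?Bv x \<in> lp_space p" using Bs by (auto simp: lp_space_def)
  have lin: "linear_on ?LS ?Bv"
    unfolding linear_on_def
  proof (intro conjI ballI allI)
    fix x y assume "x \<in> ?LS" "y \<in> ?LS"
    then have "\<And>i. i < N \<Longrightarrow> u i (add_seq x y) = add_seq (u i x) (u i y)"
      using ulin unfolding linear_on_def by blast
    then show "?Bv (add_seq x y) = add_seq (?Bv x) (?Bv y)" using N by (auto simp: add_seq_def)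
  next
    fix c x assume "x \<in> ?LS"
    then have "\<And>i. i < N \<Longrightarrow> u i (scale_seq c x) = scale_seq c (u i x)"
      using ulin unfolding linear_on_def by blast
    then show "?Bv (scale_seq c x) = scale_seq c (?Bv x)" using N by (auto simp: scale_seq_def)
  qed
  have "\<forall>i\<in>{..<N}. \<exists>C\<ge>0. \<forall>z\<in>?LS. lp_norm p (u i z) \<le> C * lorentz_norm w p z"
    using u bounded_nonneg_const lorentz_norm_nonneg by blast
  then obtain C where C: "\<And>i. i < N \<Longrightarrow> 0 \<le> C i \<and> (\<forall>z\<in>?LS. lp_norm p (u i z) \<le> C i * lorentz_norm w p z)"
    using bchoice[of "{..<N}"] by (metis lessThan_iff)
  define K where "K = real N * (\<Sum>i<N. C i powr p)"
  have K0: "0 \<le> K" unfolding K_def by (intro mult_nonneg_nonneg sum_nonneg) auto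
  have bnd: "lp_norm p (?Bv x) \<le> K powr (1/p) * lorentz_norm w p x" if x: "x \<in> ?LS" for x
  proof -
    have each: "(\<Sum>k. \<bar>u i x k\<bar> powr p) \<le> C i powr p * lnp w p x" if i: "i < N" for i
      apply (rule root_le1[OF p0 _ lnp_nonneg[OF w x]])
      using C[OF i] x by (auto simp: lorentz_norm_lnp lp_norm_def intro!: suminf_nonneg umap[OF i])
    have "(\<Sum>m. \<bar>?Bv x m\<bar> powr p) \<le> (\<Sum>m. G x (m div N))"
      by (rule suminf_le[OF _ Bs[OF x] summable_div(1)[OF N G0 Gs[OF x]]]) (use le in \<open>auto intro: abs_le_D1\<close>)
    also have "\<dots> \<le> real N * (\<Sum>k. G x k)" by (rule summable_div(2)[OF N G0 Gs[OF x]])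
    also have "(\<Sum>k. G x k) = (\<Sum>i<N. \<Sum>k. \<bar>u i x k\<bar> powr p)"
      unfolding G_def by (rule suminf_sum) (use umap x in auto)
    also have "real N * \<dots> \<le> real N * (\<Sum>i<N. C i powr p * lnp w p x)"
      by (intro mult_left_mono sum_mono each) auto
    also have "\<dots> = K * lnp w p x" by (simp add: K_def sum_distrib_right)
    finally have le2: "(\<Sum>m. \<bar>?Bv x m\<bar> powr p) \<le> K * lnp w p x" .
    have s0: "0 \<le> (\<Sum>m. \<bar>?Bv x m\<bar> powr p)" by (intro suminf_nonneg Bs x) auto
    show ?thesis unfolding lorentz_norm_lnp lp_norm_def
      using root_le2[OF p0 s0 lnp_nonneg[OF w x] K0 le2] .
  qed
  show ?thesis unfolding bounded_op_def using map lin bnd by blast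
qed

lemma comp_bounded:
  assumes B: "Ld w p B" and P: "Ld w p P" and PY: "P ` lorentz_space w p = Y"
    and U: "bounded_op (lorentz_norm w p) Y (lp_norm p) (lp_space p) U"
  shows "bounded_op (lorentz_norm w p) (lorentz_space w p) (lp_norm p) (lp_space p) (\<lambda>x. U (P (B x)))"
proof -
  let ?LS = "lorentz_space w p"
  have Bm: "x \<in> ?LS \<Longrightarrow> B x \<in> ?LS" for x using B by (auto simp: Ld_def bounded_op_def)
  have Pm: "x \<in> ?LS \<Longrightarrow> P x \<in> Y" for x using PY by blast
  have Um: "y \<in> Y \<Longrightarrow> U y \<in> lp_space p" for y using U by (auto simp: bounded_op_def)
  have Bl: "linear_on ?LS B" and Pl: "linear_on ?LS P" and Ul: "linear_on Y U"
    using B P U by (auto simp: Ld_def bounded_op_def)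
  obtain CB where CB: "CB \<ge> 0" "\<forall>x\<in>?LS. lorentz_norm w p (B x) \<le> CB * lorentz_norm w p x"
    using bounded_nonneg_const[of _ ?LS _ ?LS B] B lorentz_norm_nonneg unfolding Ld_def by blast
  obtain CP where CP: "CP \<ge> 0" "\<forall>x\<in>?LS. lorentz_norm w p (P x) \<le> CP * lorentz_norm w p x"
    using bounded_nonneg_const[of _ ?LS _ ?LS P] P lorentz_norm_nonneg unfolding Ld_def by blast
  obtain CU where CU: "CU \<ge> 0" "\<forall>x\<in>Y. lp_norm p (U x) \<le> CU * lorentz_norm w p x"
    using bounded_nonneg_const[of _ Y _ _ U] U lorentz_norm_nonneg by blast
  have map: "\<forall>x\<in>?LS. U (P (B x)) \<in> lp_space p" using Bm Pm Um by blast
  have lin: "linear_on ?LS (\<lambda>x. U (P (B x)))"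
    unfolding linear_on_def
  proof (intro conjI ballI allI)
    fix x y assume x: "x \<in> ?LS" and y: "y \<in> ?LS"
    have "B (add_seq x y) = add_seq (B x) (B y)" using Bl x y by (simp add: linear_on_def)
    moreover have "P (add_seq (B x) (B y)) = add_seq (P (B x)) (P (B y))" using Pl Bm x y by (simp add: linear_on_def)
    moreover have "U (add_seq (P (B x)) (P (B y))) = add_seq (U (P (B x))) (U (P (B y)))" using Ul Pm Bm x y by (simp add: linear_on_def)
    ultimately show "U (P (B (add_seq x y))) = add_seq (U (P (B x))) (U (P (B y)))" by simp
  next
    fix c x assume x: "x \<in> ?LS"
    have "B (scale_seq c x) = scale_seq c (B x)" using Bl x by (simp add: linear_on_def)
    moreover have "P (scale_seq c (B x)) = scale_seq c (P (B x))" using Pl Bm x by (simp add: linear_on_def)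
    moreover have "U (scale_seq c (P (B x))) = scale_seq c (U (P (B x)))" using Ul Pm Bm x by (simp add: linear_on_def)
    ultimately show "U (P (B (scale_seq c x))) = scale_seq c (U (P (B x)))" by simp
  qed
  have bnd: "lp_norm p (U (P (B x))) \<le> (CU * CP * CB) * lorentz_norm w p x" if x: "x \<in> ?LS" for x
  proof -
    have "lp_norm p (U (P (B x))) \<le> CU * lorentz_norm w p (P (B x))" using CU Pm Bm x by blast
    also have "\<dots> \<le> CU * (CP * lorentz_norm w p (B x))" using CP Bm x CU(1) by (simp add: mult_left_mono)
    also have "\<dots> \<le> CU * (CP * (CB * lorentz_norm w p x))" using CB x CU(1) CP(1) by (simp add: mult_left_mono)
    finally show ?thesis by (simp add: mult.assoc)
  qed
  show ?thesis unfolding bounded_op_def using map lin bnd by blast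
qed

theorem proposition4p2:
  fixes w :: "nat \<Rightarrow> real" and p :: real
    and Y :: "(nat \<Rightarrow> real) set"
    and P U :: "(nat \<Rightarrow> real) \<Rightarrow> (nat \<Rightarrow> real)"
  assumes "1 \<le> p"
    and "weight_seq w"
    and "Y \<subseteq> lorentz_space w p" and "linear_subspace Y"
    and "closed_in_norm (lorentz_norm w p) (lorentz_space w p) Y"
    and "Ld w p P" and "P ` lorentz_space w p = Y" and "\<forall>y\<in>Y. P y = y"
    and "bounded_op (lorentz_norm w p) Y (lp_norm p) (lp_space p) U"
    and "bij_betw U Y (lp_space p)"
    and "\<exists>C. \<forall>y\<in>Y. lorentz_norm w p y \<le> C * lp_norm p (U y)"
  shows "\<forall>S. in_JT w p (\<lambda>x. U (P x)) S \<longleftrightarrow> in_Jj w p S"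
proof (intro allI iffI)
  note p = assms(1) and w = assms(2) and YL = assms(3) and Ysub = assms(4)
    and Pd = assms(6) and PY = assms(7) and Pid = assms(8) and U = assms(9)
    and bij = assms(10) and Cinv = assms(11)
  let ?LS = "lorentz_space w p"
  fix S
  {
    assume "in_JT w p (\<lambda>x. U (P x)) S"
    then obtain n :: nat and A B where AB: "\<forall>i<n. Ld w p (A i) \<and> Ld w p (B i)"
      and S: "\<forall>x\<in>?LS. S x = (\<lambda>k. \<Sum>i<n. A i (U (P (B i x))) k)"
      unfolding in_JT_def by blast
    show "in_Jj w p S"
    proof (cases "n = 0")
      case True
      have z: "(\<lambda>k. 0::real) \<in> ?LS" by (rule zero_lorentz(1))
      have nz: "lorentz_norm w p (\<lambda>k. 0) = 0" by (simp add: lorentz_norm_lnp zero_lorentz(2))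
      have A0: "Ld w p (\<lambda>z k. 0)"
        unfolding Ld_def bounded_op_def linear_on_def
        using z nz by (auto simp: add_seq_def scale_seq_def intro!: exI[of _ 0])
      have B0: "bounded_op (lorentz_norm w p) ?LS (lp_norm p) (lp_space p) (\<lambda>x k. 0)"
        unfolding bounded_op_def linear_on_def
        by (auto simp: add_seq_def scale_seq_def lp_space_def lp_norm_def intro!: exI[of _ 0])
      show ?thesis unfolding in_Jj_def
        by (rule exI[of _ "\<lambda>z k. 0"], rule exI[of _ "\<lambda>x k. 0"]) (use A0 B0 S True in auto)
    next
      case False
      then have N: "0 < n" by simp
      let ?u = "\<lambda>i x. U (P (B i x))"
      have ub: "\<forall>i<n. bounded_op (lorentz_norm w p) ?LS (lp_norm p) (lp_space p) (?u i)"
        using comp_bounded[OF _ Pd PY U] AB by blast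
      have Bv: "bounded_op (lorentz_norm w p) ?LS (lp_norm p) (lp_space p) (\<lambda>x m. ?u (m mod n) x (m div n))"
        by (rule Bv_bounded[OF w p N ub])
      have Av: "Ld w p (\<lambda>z k. \<Sum>i<n. A i (\<lambda>j. z (n * j + i)) k)"
        by (rule Av_Ld[OF w p N]) (use AB in blast)
      have eq: "S x = (\<lambda>k. \<Sum>i<n. A i (\<lambda>j. (\<lambda>m. ?u (m mod n) x (m div n)) (n * j + i)) k)" if x: "x \<in> ?LS" for x
      proof -
        have "\<And>i. i < n \<Longrightarrow> (\<lambda>j. (\<lambda>m. ?u (m mod n) x (m div n)) (n * j + i)) = ?u i x"
          by simp
        then show ?thesis using S x by simp
      qed
      show ?thesis unfolding in_Jj_def using Av Bv eq by blast
    qed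
  }
  {
    assume "in_Jj w p S"
    then obtain A B where A: "Ld w p A"
      and B: "bounded_op (lorentz_norm w p) ?LS (lp_norm p) (lp_space p) B"
      and S: "\<forall>x\<in>?LS. S x = A (B x)"
      unfolding in_Jj_def by blast
    let ?V = "inv_into Y U"
    have injU: "inj_on U Y" and imU: "U ` Y = lp_space p" using bij by (auto simp: bij_betw_def)
    have Bm: "x \<in> ?LS \<Longrightarrow> B x \<in> lp_space p" for x using B by (auto simp: bounded_op_def)
    have Bl: "linear_on ?LS B" using B by (auto simp: bounded_op_def)
    have Ul: "linear_on Y U" using U by (auto simp: bounded_op_def)
    have Vm: "z \<in> lp_space p \<Longrightarrow> ?V z \<in> Y" for z using imU inv_into_into by metis
    have UV: "z \<in> lp_space p \<Longrightarrow> U (?V z) = z" for z using imU f_inv_into_f by metis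
    have VU: "y \<in> Y \<Longrightarrow> ?V (U y) = y" for y using injU inv_into_f_f by metis
    have Yadd: "a \<in> Y \<Longrightarrow> b \<in> Y \<Longrightarrow> add_seq a b \<in> Y" for a b using Ysub by (auto simp: linear_subspace_def)
    have Ysc: "a \<in> Y \<Longrightarrow> scale_seq c a \<in> Y" for a c using Ysub by (auto simp: linear_subspace_def)
    obtain C where C: "\<forall>y\<in>Y. lorentz_norm w p y \<le> C * lp_norm p (U y)" using Cinv by blast
    obtain CB where CB: "CB \<ge> 0" "\<forall>x\<in>?LS. lp_norm p (B x) \<le> CB * lorentz_norm w p x"
      using bounded_nonneg_const[of _ ?LS _ _ B] B lorentz_norm_nonneg by blast
    have Vd: "Ld w p (\<lambda>x. ?V (B x))"
      unfolding Ld_def bounded_op_def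
    proof (intro conjI)
      show "\<forall>x\<in>?LS. ?V (B x) \<in> ?LS" using Vm Bm YL by blast
      show "linear_on ?LS (\<lambda>x. ?V (B x))"
        unfolding linear_on_def
      proof (intro conjI ballI allI)
        fix x y assume x: "x \<in> ?LS" and y: "y \<in> ?LS"
        let ?a = "?V (B x)" and ?b = "?V (B y)"
        have ab: "?a \<in> Y" "?b \<in> Y" using Vm Bm x y by auto
        have "U (add_seq ?a ?b) = add_seq (U ?a) (U ?b)" using Ul ab by (simp add: linear_on_def)
        also have "\<dots> = add_seq (B x) (B y)" using UV Bm x y by simp
        also have "\<dots> = B (add_seq x y)" using Bl x y by (simp add: linear_on_def)
        finally have "?V (B (add_seq x y)) = ?V (U (add_seq ?a ?b))" by simp
        also have "\<dots> = add_seq ?a ?b" using VU Yadd ab by simp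
        finally show "?V (B (add_seq x y)) = add_seq ?a ?b" .
      next
        fix c x assume x: "x \<in> ?LS"
        let ?a = "?V (B x)"
        have a: "?a \<in> Y" using Vm Bm x by auto
        have "U (scale_seq c ?a) = scale_seq c (U ?a)" using Ul a by (simp add: linear_on_def)
        also have "\<dots> = scale_seq c (B x)" using UV Bm x by simp
        also have "\<dots> = B (scale_seq c x)" using Bl x by (simp add: linear_on_def)
        finally have "?V (B (scale_seq c x)) = ?V (U (scale_seq c ?a))" by simp
        also have "\<dots> = scale_seq c ?a" using VU Ysc a by simp
        finally show "?V (B (scale_seq c x)) = scale_seq c ?a" .
      qed
      show "\<exists>K. \<forall>x\<in>?LS. lorentz_norm w p (?V (B x)) \<le> K * lorentz_norm w p x"
      proof (intro exI ballI)
        fix x assume x: "x \<in> ?LS"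
        have "lorentz_norm w p (?V (B x)) \<le> C * lp_norm p (U (?V (B x)))" using C Vm Bm x by blast
        also have "\<dots> \<le> max C 0 * lp_norm p (B x)" using UV Bm x lp_norm_nonneg
          by (simp add: mult_right_mono)
        also have "\<dots> \<le> max C 0 * (CB * lorentz_norm w p x)" using CB x by (simp add: mult_left_mono)
        finally show "lorentz_norm w p (?V (B x)) \<le> (max C 0 * CB) * lorentz_norm w p x" by (simp add: mult.assoc)
      qed
    qed
    have 1: "\<forall>i<(1::nat). Ld w p ((\<lambda>i. A) i) \<and> Ld w p ((\<lambda>i x. ?V (B x)) i)" using A Vd by simp
    have 2: "\<forall>x\<in>?LS. S x = (\<lambda>k. \<Sum>i<(1::nat). (\<lambda>i. A) i ((\<lambda>x. U (P x)) ((\<lambda>i x. ?V (B x)) i x)) k)"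
    proof
      fix x assume x: "x \<in> ?LS"
      have "U (P (?V (B x))) = B x" using Pid Vm UV Bm x by simp
      then show "S x = (\<lambda>k. \<Sum>i<(1::nat). (\<lambda>i. A) i ((\<lambda>x. U (P x)) ((\<lambda>i x. ?V (B x)) i x)) k)" using S x by simp
    qed
    show "in_JT w p (\<lambda>x. U (P x)) S"
      unfolding in_JT_def by (rule exI[of _ 1], rule exI[of _ "\<lambda>i. A"], rule exI[of _ "\<lambda>i x. ?V (B x)"], rule conjI[OF 1 2])
  }
qed

end
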